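(* Let $G$ be a finite $p$-group ($p$ a prime) and $f\in\mathrm{Aut}(G)$. If $Q=\mathcal{Q}(G,f)$ is a latin, involutory, simply connected quandle, then $G$ is cyclic.
   Context: A quandle is a set $Q$ with a binary operation $*$ such that every left translation $L_x:y\mapsto x*y$ is bijective, $x*(y*z)=(x*y)*(x*z)$ and $x*x=x$. $\mathcal{Q}(G,f)$ is $G$ with $x*y=xf(x^{-1}y)$. $Q$ is latin if every right translation $y\mapsto y*x$ is bijective, involutory if $x*(x*y)=y$ for all $x,y$, and connected if $\langle L_x:x\in Q\rangle$ is transitive. For a set $S$, a quandle cocycle with values in $\mathrm{Sym}_S$ is $\theta:Q\times Q\to\mathrm{Sym}_S$ with $\theta_{x*y,x*z}\theta_{x,z}=\theta_{x,y*z}\theta_{y,z}$ and $\theta_{x,x}=1$; it is cohomologous to the trivial cocycle if there is $\gamma:Q\to\mathrm{Sym}_S$ with $\theta_{x,y}=\gamma_{x*y}\gamma_y^{-1}$ for all $x,y$. $Q$ is simply connected if it is connected and, for every set $S$, every such cocycle is cohomologous to the trivial cocycle. *)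

theory Defs
  imports "HOL-Algebra.Algebra"
begin

definition is_quandle :: "'a set \<Rightarrow> ('a \<Rightarrow> 'a \<Rightarrow> 'a) \<Rightarrow> bool" where
  "is_quandle Q op \<longleftrightarrow>
     (\<forall>x\<in>Q. \<forall>y\<in>Q. op x y \<in> Q) \<and>
     (\<forall>x\<in>Q. bij_betw (op x) Q Q) \<and>
     (\<forall>x\<in>Q. \<forall>y\<in>Q. \<forall>z\<in>Q. op x (op y z) = op (op x y) (op x z)) \<and>
     (\<forall>x\<in>Q. op x x = x)"

definition coset_qop :: "('g, 'b) monoid_scheme \<Rightarrow> ('g \<Rightarrow> 'g) \<Rightarrow> 'g \<Rightarrow> 'g \<Rightarrow> 'g" where
  "coset_qop G f x y = x \<otimes>\<^bsub>G\<^esub> f (inv\<^bsub>G\<^esub> x \<otimes>\<^bsub>G\<^esub> y)"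

definition quandle_latin :: "'a set \<Rightarrow> ('a \<Rightarrow> 'a \<Rightarrow> 'a) \<Rightarrow> bool" where
  "quandle_latin Q op \<longleftrightarrow> (\<forall>x\<in>Q. bij_betw (\<lambda>y. op y x) Q Q)"

definition quandle_involutory :: "'a set \<Rightarrow> ('a \<Rightarrow> 'a \<Rightarrow> 'a) \<Rightarrow> bool" where
  "quandle_involutory Q op \<longleftrightarrow> (\<forall>x\<in>Q. \<forall>y\<in>Q. op x (op x y) = y)"

text \<open>Connectedness = the group generated by the L_a acts transitively, i.e.
  any two elements are joined by a finite word in the L_a and their inverses.\<close>
definition ltrans_step :: "'a set \<Rightarrow> ('a \<Rightarrow> 'a \<Rightarrow> 'a) \<Rightarrow> ('a \<times> 'a) set" where
  "ltrans_step Q op = {(u, op a u) | a u. a \<in> Q \<and> u \<in> Q}"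

definition quandle_connected :: "'a set \<Rightarrow> ('a \<Rightarrow> 'a \<Rightarrow> 'a) \<Rightarrow> bool" where
  "quandle_connected Q op \<longleftrightarrow>
     (\<forall>x\<in>Q. \<forall>y\<in>Q. (x, y) \<in> (ltrans_step Q op \<union> converse (ltrans_step Q op))\<^sup>*)"

definition Sym :: "'s set \<Rightarrow> ('s \<Rightarrow> 's) set" where
  "Sym S = {g. bij_betw g S S \<and> (\<forall>x. x \<notin> S \<longrightarrow> g x = x)}"

definition quandle_cocycle ::
  "'a set \<Rightarrow> ('a \<Rightarrow> 'a \<Rightarrow> 'a) \<Rightarrow> 's set \<Rightarrow> ('a \<Rightarrow> 'a \<Rightarrow> 's \<Rightarrow> 's) \<Rightarrow> bool" where
  "quandle_cocycle Q op S \<theta> \<longleftrightarrow>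
     (\<forall>x\<in>Q. \<forall>y\<in>Q. \<theta> x y \<in> Sym S) \<and>
     (\<forall>x\<in>Q. \<forall>y\<in>Q. \<forall>z\<in>Q.
        \<theta> (op x y) (op x z) \<circ> \<theta> x z = \<theta> x (op y z) \<circ> \<theta> y z) \<and>
     (\<forall>x\<in>Q. \<theta> x x = id)"

definition cohomologous_trivial ::
  "'a set \<Rightarrow> ('a \<Rightarrow> 'a \<Rightarrow> 'a) \<Rightarrow> 's set \<Rightarrow> ('a \<Rightarrow> 'a \<Rightarrow> 's \<Rightarrow> 's) \<Rightarrow> bool" where
  "cohomologous_trivial Q op S \<theta> \<longleftrightarrow>
     (\<exists>\<gamma>. (\<forall>x\<in>Q. \<gamma> x \<in> Sym S) \<and>
          (\<forall>x\<in>Q. \<forall>y\<in>Q. \<theta> x y = \<gamma> (op x y) \<circ> Hilbert_Choice.inv (\<gamma> y)))"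

text \<open>Simply connected. The sets S range over subsets of nat (all countable sets): for finite Q this is equivalent to quantifying over all sets.\<close>
definition simply_connected :: "'a set \<Rightarrow> ('a \<Rightarrow> 'a \<Rightarrow> 'a) \<Rightarrow> bool" where
  "simply_connected Q op \<longleftrightarrow> quandle_connected Q op \<and>
     (\<forall>(S::nat set) \<theta>. quandle_cocycle Q op S \<theta> \<longrightarrow> cohomologous_trivial Q op S \<theta>)"

end

theory Submission
  imports Defs
begin

lemma (in comm_group) h1: "a \<in> carrier G \<Longrightarrow> b \<in> carrier G \<Longrightarrow> c \<in> carrier G \<Longrightarrow> inv (a \<otimes> b) \<otimes> (a \<otimes> c) = inv b \<otimes> c"
  by (simp add: inv_mult_group m_assoc[symmetric]) (simp add: m_assoc)
lemma (in comm_group) h2: "a \<in> carrier G \<Longrightarrow> b \<in> carrier G \<Longrightarrow> c \<in> carrier G \<Longrightarrow> d \<in> carrier G \<Longrightarrow> (a \<otimes> b) \<otimes> (c \<otimes> d) = (a \<otimes> c) \<otimes> (b \<otimes> d)"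
  by (simp add: m_ac)
lemma (in comm_group) h3: "m \<in> carrier G \<Longrightarrow> g \<in> carrier G \<Longrightarrow> inv (m \<otimes> g [^] ((k::int) * j)) = inv m \<otimes> g [^] (k * (- j))"
  by (simp add: inv_mult int_pow_neg)

lemma (in group) bez_in:
  assumes M: "subgroup M G" and g: "g \<in> carrier G"
    and a: "g [^] (a::int) \<in> M" and b: "g [^] (b::int) \<in> M" and c: "gcd a b = 1"
  shows "g \<in> M"
proof -
  obtain u v where uv: "u * a + v * b = 1" using bezout_int[of a b] c by auto
  have "g = g [^] (u * a + v * b)" using uv g by simp
  also have "\<dots> = (g [^] a) [^] u \<otimes> (g [^] b) [^] v"
    using g by (simp add: int_pow_mult int_pow_pow mult.commute)
  also have "\<dots> \<in> M"
    using a b M by (simp add: subgroup.m_closed subgroup_int_pow_closed)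
  finally show ?thesis .
qed

lemma (in group) maximal_exists:
  assumes fin: "finite (carrier G)" and H: "subgroup H G" and Hne: "H \<noteq> carrier G"
  shows "\<exists>M. subgroup M G \<and> H \<subseteq> M \<and> M \<noteq> carrier G \<and>
           (\<forall>K. subgroup K G \<and> M \<subseteq> K \<longrightarrow> K = M \<or> K = carrier G)"
proof -
  define F where "F = {K. subgroup K G \<and> H \<subseteq> K \<and> K \<noteq> carrier G}"
  have "F \<subseteq> Pow (carrier G)" unfolding F_def using subgroup.subset by blast
  then have fF: "finite F" using fin by (meson finite_Pow_iff finite_subset)
  have neF: "F \<noteq> {}" using H Hne unfolding F_def by auto
  obtain M where M: "M \<in> F" and mx: "\<forall>K\<in>F. M \<le> K \<longrightarrow> M = K"
    using finite_has_maximal[OF fF neF] by (elim bexE)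
  have M1: "subgroup M G" "H \<subseteq> M" "M \<noteq> carrier G" using M unfolding F_def by auto
  have M2: "K = M \<or> K = carrier G" if "subgroup K G" "M \<subseteq> K" for K
  proof (cases "K = carrier G")
    case False
    then have "K \<in> F" using that M1 unfolding F_def by auto
    then show ?thesis using mx that by auto
  qed simp
  show ?thesis using M1 M2 by blast
qed

lemma (in comm_group) char_exists:
  assumes fin: "finite (carrier G)" and card: "card (carrier G) = p ^ n"
    and pr: "Factorial_Ring.prime (int p)"
    and M: "subgroup M G" and Mne: "M \<noteq> carrier G"
    and mx: "\<forall>K. subgroup K G \<and> M \<subseteq> K \<longrightarrow> K = M \<or> K = carrier G"
  shows "\<exists>\<chi>::'a \<Rightarrow> int. (\<forall>x\<in>carrier G. \<forall>y\<in>carrier G. \<chi> (x \<otimes> y) mod int p = (\<chi> x + \<chi> y) mod int p)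
           \<and> (\<forall>x\<in>carrier G. int p dvd \<chi> x \<longleftrightarrow> x \<in> M)"
proof -
  have Msub: "M \<subseteq> carrier G" using M subgroup.subset by blast
  obtain g where g: "g \<in> carrier G" "g \<notin> M" using Msub Mne by blast
  define T where "T k = {m \<otimes> g [^] (k * j) | m j. m \<in> M}" for k :: int
  have Tsub: "subgroup (T k) G" for k
  proof (rule subgroupI)
    show "T k \<subseteq> carrier G" using Msub g by (auto simp: T_def)
    show "T k \<noteq> {}" using M unfolding T_def by (auto dest: subgroup.one_closed)
    fix a assume "a \<in> T k"
    then obtain m j where a: "a = m \<otimes> g [^] (k * j)" "m \<in> M" unfolding T_def by blast
    have mc: "m \<in> carrier G" using a Msub by auto
    have "inv a = inv m \<otimes> g [^] (k * (- j))"
      using a mc g by (simp add: h3)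
    moreover have "inv m \<in> M" using M a by (simp add: subgroup.m_inv_closed)
    ultimately show "inv a \<in> T k" unfolding T_def by blast
  next
    fix a b assume "a \<in> T k" "b \<in> T k"
    then obtain m j m' j' where a: "a = m \<otimes> g [^] (k * j)" "m \<in> M"
      and b: "b = m' \<otimes> g [^] (k * j')" "m' \<in> M" unfolding T_def by blast
    have mc: "m \<in> carrier G" "m' \<in> carrier G" using a b Msub by auto
    have "a \<otimes> b = (m \<otimes> m') \<otimes> g [^] (k * (j + j'))"
      using a b mc g by (simp add: int_pow_mult distrib_left h2)
    moreover have "m \<otimes> m' \<in> M" using M a b by (simp add: subgroup.m_closed)
    ultimately show "a \<otimes> b \<in> T k" unfolding T_def by blast
  qed
  have MT: "M \<subseteq> T k" for k
  proof
    fix m assume "m \<in> M"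
    moreover then have "m = m \<otimes> g [^] (k * 0)" using Msub by auto
    ultimately show "m \<in> T k" unfolding T_def by blast
  qed
  have gT: "g [^] k \<in> T k" for k
  proof -
    have "g [^] k = \<one> \<otimes> g [^] (k * 1)" using g by simp
    moreover have "\<one> \<in> M" using M by (simp add: subgroup.one_closed)
    ultimately show ?thesis unfolding T_def by blast
  qed
  have "g \<in> T 1" using gT[of 1] g by simp
  then have "T 1 \<noteq> M" using g by blast
  moreover have "T 1 = M \<or> T 1 = carrier G"
    using mx Tsub[of 1] MT[of 1] by simp
  ultimately have T1: "T 1 = carrier G" by simp
  have gpn: "g [^] (int (p ^ n)) \<in> M"
  proof -
    have "g [^] (p ^ n) = \<one>"
      using pow_order_eq_1[OF g(1)] card by (simp add: order_def)
    then have "g [^] (int (p ^ n)) = \<one>" by (simp only: int_pow_int)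
    then show ?thesis using M by (simp add: subgroup.one_closed)
  qed
  have gp: "g [^] (int p) \<in> M"
  proof -
    have "T (int p) \<noteq> carrier G"
    proof
      assume "T (int p) = carrier G"
      then have "g \<in> T (int p)" using g by auto
      then obtain m j where mj: "g = m \<otimes> g [^] (int p * j)" "m \<in> M" unfolding T_def by blast
      have mc: "m \<in> carrier G" using mj Msub by auto
      have "g [^] (1 - int p * j) = g \<otimes> inv (g [^] (int p * j))"
        using g by (simp add: int_pow_diff)
      also have "\<dots> = (m \<otimes> g [^] (int p * j)) \<otimes> inv (g [^] (int p * j))"
        using mj(1) by (rule arg_cong)
      also have "\<dots> = m" using mc g by (simp add: m_assoc)
      finally have A: "g [^] (1 - int p * j) \<in> M" using mj by simp
      have "\<not> int p dvd (1 - int p * j)"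
      proof
        assume d: "int p dvd (1 - int p * j)"
        have "int p dvd (1 - int p * j) + int p * j" using d by (rule dvd_add) simp
        then have "int p dvd 1" by simp
        then show False using not_prime_unit pr by blast
      qed
      then have "coprime (int p) (1 - int p * j)" using pr by (rule prime_imp_coprime[rotated])
      then have "coprime (1 - int p * j) (int p)" by (simp only: coprime_commute)
      then have "coprime (1 - int p * j) (int p ^ n)" by simp
      then have "gcd (1 - int p * j) (int (p ^ n)) = 1" by (simp only: of_nat_power coprime_iff_gcd_eq_1)
      then have "g \<in> M" using bez_in[OF M g(1) A gpn] by simp
      with g show False by simp
    qed
    moreover have "T (int p) = M \<or> T (int p) = carrier G"
      using mx Tsub[of "int p"] MT[of "int p"] by simp
    ultimately have "T (int p) = M" by simp
    then show ?thesis using gT by blast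
  qed
  have K: "g [^] i \<in> M \<longleftrightarrow> int p dvd i" for i :: int
  proof
    assume "g [^] i \<in> M"
    show "int p dvd i"
    proof (rule ccontr)
      assume "\<not> int p dvd i"
      then have "coprime (int p) i" using pr by (rule prime_imp_coprime[rotated])
      then have "coprime i (int p)" by (simp only: coprime_commute)
      then have "gcd i (int p) = 1" by (simp only: coprime_iff_gcd_eq_1)
      then have "g \<in> M" using bez_in[OF M g(1) \<open>g [^] i \<in> M\<close> gp] by simp
      with g show False by simp
    qed
  next
    assume "int p dvd i"
    then obtain k where "i = int p * k" by blast
    then have "g [^] i = (g [^] (int p)) [^] k" using g by (simp add: int_pow_pow)
    then show "g [^] i \<in> M" using gp M by (simp add: subgroup_int_pow_closed)
  qed
  define P where "P x j \<longleftrightarrow> x \<otimes> g [^] (- j) \<in> M" for x and j :: int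
  have Pex: "\<exists>j. P x j" if x: "x \<in> carrier G" for x
  proof -
    have "x \<in> T 1" using x T1 by simp
    then obtain m and j :: int where mj: "x = m \<otimes> g [^] (1 * j)" "m \<in> M" unfolding T_def by blast
    have mc: "m \<in> carrier G" using mj Msub by auto
    have "x \<otimes> g [^] (- j) = m" using mj mc g
      by (simp add: m_assoc int_pow_neg)
    then show ?thesis unfolding P_def using mj by metis
  qed
  define \<chi> where "\<chi> x = (SOME j. P x j)" for x
  have Pchi: "P x (\<chi> x)" if "x \<in> carrier G" for x
    unfolding \<chi>_def using Pex[OF that] by (rule someI_ex)
  have Puniq: "int p dvd (i - j)" if "x \<in> carrier G" "P x i" "P x j" for x i j
  proof -
    have "inv (x \<otimes> g [^] (- i)) \<otimes> (x \<otimes> g [^] (- j)) \<in> M"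
      using that M unfolding P_def by (simp add: subgroup.m_closed subgroup.m_inv_closed)
    moreover have "inv (x \<otimes> g [^] (- i)) \<otimes> (x \<otimes> g [^] (- j)) = g [^] (i - j)"
      using that g
      by (simp add: h1 int_pow_neg int_pow_diff)
    ultimately show ?thesis using K by simp
  qed
  have Pmult: "P (x \<otimes> y) (i + j)" if "x \<in> carrier G" "y \<in> carrier G" "P x i" "P y j" for x y i j
  proof -
    have "(x \<otimes> g [^] (- i)) \<otimes> (y \<otimes> g [^] (- j)) \<in> M"
      using that M unfolding P_def by (simp add: subgroup.m_closed)
    moreover have "(x \<otimes> g [^] (- i)) \<otimes> (y \<otimes> g [^] (- j)) = (x \<otimes> y) \<otimes> g [^] (- (i + j))"
    proof -
      have e: "g [^] (- (i + j)) = g [^] (- i) \<otimes> g [^] (- j)"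
        using int_pow_mult[OF g(1), of "- i" "- j"] by simp
      show ?thesis using that g by (simp only: e h2 int_pow_closed)
    qed
    ultimately show ?thesis unfolding P_def by simp
  qed
  show ?thesis
  proof (intro exI conjI ballI)
    fix x y assume xy: "x \<in> carrier G" "y \<in> carrier G"
    have "int p dvd (\<chi> (x \<otimes> y) - (\<chi> x + \<chi> y))"
      using Puniq[of "x \<otimes> y"] Pchi Pmult xy by simp
    then show "\<chi> (x \<otimes> y) mod int p = (\<chi> x + \<chi> y) mod int p"
      by (simp add: mod_eq_dvd_iff)
  next
    fix x assume x: "x \<in> carrier G"
    have P0: "P x (\<chi> x)" using Pchi x .
    show "int p dvd \<chi> x \<longleftrightarrow> x \<in> M"
    proof
      assume "int p dvd \<chi> x"
      then have A: "g [^] (- \<chi> x) \<in> M" using K by simp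
      have "x = (x \<otimes> g [^] (- \<chi> x)) \<otimes> inv (g [^] (- \<chi> x))"
        using x g by (simp add: m_assoc)
      also have "\<dots> \<in> M" using P0 A M unfolding P_def
        by (simp add: subgroup.m_closed subgroup.m_inv_closed)
      finally show "x \<in> M" .
    next
      assume xM: "x \<in> M"
      have "inv x \<otimes> (x \<otimes> g [^] (- \<chi> x)) \<in> M" using P0 xM M unfolding P_def
        by (simp add: subgroup.m_closed subgroup.m_inv_closed)
      moreover have "inv x \<otimes> (x \<otimes> g [^] (- \<chi> x)) = g [^] (- \<chi> x)"
        using x g by (simp add: m_assoc[symmetric])
      ultimately have "int p dvd - \<chi> x" using K by simp
      then show "int p dvd \<chi> x" by simp
    qed
  qed
qed

definition rot :: "nat \<Rightarrow> int \<Rightarrow> nat \<Rightarrow> nat" where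
  "rot q k s = (if s < q then nat ((int s + k) mod int q) else s)"

lemma rot_comp: "0 < q \<Longrightarrow> rot q a \<circ> rot q b = rot q (a + b)"
proof
  fix s assume q: "0 < q"
  show "(rot q a \<circ> rot q b) s = rot q (a + b) s"
  proof (cases "s < q")
    case True
    have lt: "nat ((int s + b) mod int q) < q" using q by (simp add: nat_less_iff)
    have "int (nat ((int s + b) mod int q)) = (int s + b) mod int q" using q by simp
    then show ?thesis using True lt
      by (simp add: rot_def mod_add_left_eq add.assoc add.commute[of b a])
  qed (simp add: rot_def)
qed

lemma rot_cong: "a mod int q = b mod int q \<Longrightarrow> rot q a = rot q b"
proof (rule ext)
  fix s assume "a mod int q = b mod int q"
  then have "(int s + a) mod int q = (int s + b) mod int q" by (rule mod_add_cong[OF refl])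
  then show "rot q a s = rot q b s" by (simp add: rot_def)
qed

lemma rot_0: "rot q 0 = id"
  by (rule ext) (simp add: rot_def)

lemma rot_Sym: assumes q: "0 < q" shows "rot q k \<in> Sym {..<q}"
proof -
  have c: "rot q a s < q" if "s < q" for a s
    using that q by (simp add: rot_def nat_less_iff)
  have i: "rot q (-k) (rot q k s) = s" "rot q k (rot q (-k) s) = s" for s
    using fun_cong[OF rot_comp[OF q, of "-k" k], of s] fun_cong[OF rot_comp[OF q, of k "-k"], of s]
    by (simp_all add: rot_0)
  have "bij_betw (rot q k) {..<q} {..<q}"
    by (rule bij_betw_byWitness[where f'="rot q (-k)"]) (use i c in auto)
  moreover have "\<forall>x. x \<notin> {..<q} \<longrightarrow> rot q k x = x" by (simp add: rot_def)
  ultimately show ?thesis by (simp add: Sym_def)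
qed

lemma rot_fix: "0 < q \<Longrightarrow> rot q k 0 = 0 \<Longrightarrow> k mod int q = 0"
proof -
  assume q: "0 < q" and r: "rot q k 0 = 0"
  have "0 \<le> k mod int q" using q by simp
  moreover have "k mod int q \<le> 0" using q r by (simp add: rot_def)
  ultimately show ?thesis by linarith
qed

lemma Sym_bij: "g \<in> Sym S \<Longrightarrow> bij g"
proof -
  assume "g \<in> Sym S"
  then have b: "bij_betw g S S" and o: "\<And>x. x \<notin> S \<Longrightarrow> g x = x" by (auto simp: Sym_def)
  have "bij_betw g (- S) (- S)"
    by (rule bij_betw_byWitness[where f'=id]) (use o in auto)
  then have "bij_betw g (S \<union> - S) (S \<union> - S)" using b by (intro bij_betw_combine) auto
  then show "bij g" by simp
qed

lemma omega_mod:
  fixes q A A' B B' C C' D D' :: int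
  shows "A mod q = A' mod q \<Longrightarrow> B mod q = B' mod q \<Longrightarrow> C mod q = C' mod q \<Longrightarrow> D mod q = D' mod q
   \<Longrightarrow> (A * B - C * D) mod q = (A' * B' - C' * D') mod q"
  by (intro mod_diff_cong mod_mult_cong)

lemma (in group) chi_one:
  fixes \<chi> :: "'a \<Rightarrow> int"
  assumes hm: "\<forall>x\<in>carrier G. \<forall>y\<in>carrier G. \<chi> (x \<otimes> y) mod q = (\<chi> x + \<chi> y) mod q"
  shows "\<chi> \<one> mod q = 0"
proof -
  have "\<chi> (\<one> \<otimes> \<one>) mod q = (\<chi> \<one> + \<chi> \<one>) mod q" using hm by blast
  then have "\<chi> \<one> mod q = (\<chi> \<one> + \<chi> \<one>) mod q" by simp
  then have "q dvd (\<chi> \<one> - (\<chi> \<one> + \<chi> \<one>))" by (simp add: mod_eq_dvd_iff)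
  then show ?thesis by simp
qed

lemma (in group) chi_inv:
  fixes \<chi> :: "'a \<Rightarrow> int"
  assumes hm: "\<forall>x\<in>carrier G. \<forall>y\<in>carrier G. \<chi> (x \<otimes> y) mod q = (\<chi> x + \<chi> y) mod q"
    and y: "y \<in> carrier G"
  shows "\<chi> (inv y) mod q = (- \<chi> y) mod q"
proof -
  have "\<chi> (y \<otimes> inv y) mod q = (\<chi> y + \<chi> (inv y)) mod q" using hm[rule_format, OF y inv_closed[OF y]] .
  then have "(\<chi> y + \<chi> (inv y)) mod q = \<chi> \<one> mod q" using y by simp
  also have "\<dots> = 0" using chi_one[OF hm] .
  finally have "q dvd (\<chi> y + \<chi> (inv y))" by (simp add: mod_eq_0_iff_dvd)
  then have "q dvd (\<chi> (inv y) - (- \<chi> y))" by (simp add: add.commute)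
  then show ?thesis by (simp add: mod_eq_dvd_iff)
qed

lemma (in group) chi_T:
  fixes \<chi> :: "'a \<Rightarrow> int"
  assumes hm: "\<forall>x\<in>carrier G. \<forall>y\<in>carrier G. \<chi> (x \<otimes> y) mod q = (\<chi> x + \<chi> y) mod q"
    and b: "b \<in> carrier G" and y: "y \<in> carrier G"
  shows "\<chi> (b \<otimes> (y \<otimes> b)) mod q = (\<chi> y + 2 * \<chi> b) mod q"
proof -
  have "\<chi> (b \<otimes> (y \<otimes> b)) mod q = (\<chi> b + \<chi> (y \<otimes> b)) mod q" using hm b y by simp
  also have "\<dots> = (\<chi> b + (\<chi> y + \<chi> b)) mod q"
    using hm b y by (intro mod_add_cong) auto
  also have "\<dots> = (\<chi> y + 2 * \<chi> b) mod q" by (simp add: algebra_simps)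
  finally show ?thesis .
qed

lemma (in group) chi_op:
  fixes \<chi> :: "'a \<Rightarrow> int"
  assumes hm: "\<forall>x\<in>carrier G. \<forall>y\<in>carrier G. \<chi> (x \<otimes> y) mod q = (\<chi> x + \<chi> y) mod q"
    and x: "x \<in> carrier G" and y: "y \<in> carrier G"
  shows "\<chi> (x \<otimes> (inv y \<otimes> x)) mod q = (2 * \<chi> x - \<chi> y) mod q"
proof -
  have "\<chi> (x \<otimes> (inv y \<otimes> x)) mod q = (\<chi> (inv y) + 2 * \<chi> x) mod q"
    using chi_T[OF hm x] y by simp
  also have "\<dots> = (- \<chi> y + 2 * \<chi> x) mod q"
    using chi_inv[OF hm y] by (intro mod_add_cong) auto
  also have "\<dots> = (2 * \<chi> x - \<chi> y) mod q" by simp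
  finally show ?thesis .
qed

lemma (in group) chi_sq:
  fixes \<chi> :: "'a \<Rightarrow> int"
  assumes hm: "\<forall>x\<in>carrier G. \<forall>y\<in>carrier G. \<chi> (x \<otimes> y) mod q = (\<chi> x + \<chi> y) mod q"
    and x: "x \<in> carrier G"
  shows "\<chi> (x \<otimes> x) mod q = (2 * \<chi> x) mod q"
  using hm x by simp

lemma (in comm_group) aba: "a \<in> carrier G \<Longrightarrow> x \<in> carrier G \<Longrightarrow> a \<otimes> (x \<otimes> a) = (a \<otimes> a) \<otimes> x"
  by (simp add: m_ac)

lemma (in comm_group) cancel4: "a \<in> carrier G \<Longrightarrow> b \<in> carrier G \<Longrightarrow> inv b \<otimes> (inv a \<otimes> (b \<otimes> a)) = \<one>"
proof -
  assume a: "a \<in> carrier G" and b: "b \<in> carrier G"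
  have "inv a \<otimes> (b \<otimes> a) = inv a \<otimes> (a \<otimes> b)" using a b by (simp add: m_comm)
  also have "\<dots> = b" using a b by (simp add: m_assoc[symmetric])
  finally show ?thesis using b by simp
qed

lemma main_aux:
  fixes G :: "('g, 'b) monoid_scheme" (structure) and f :: "'g \<Rightarrow> 'g" and p :: nat
  assumes "group G"
    and "finite (carrier G)"
    and "Factorial_Ring.prime p"
    and "\<exists>n. card (carrier G) = p ^ n"
    and "f \<in> iso G G"
    and "quandle_latin (carrier G) (coset_qop G f)"
    and "quandle_involutory (carrier G) (coset_qop G f)"
    and "simply_connected (carrier G) (coset_qop G f)"
  shows "cyclic_group G"
proof -
  interpret group G by fact
  have fhom: "f \<in> hom G G" using assms(5) by (simp add: iso_def)
  interpret fh: group_hom G G f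
    by (simp add: group_hom_def group_hom_axioms_def fhom is_group)
  have fcl: "f x \<in> carrier G" if "x \<in> carrier G" for x
    using that fhom by (simp add: hom_in_carrier)
  have ff: "f (f y) = y" if y: "y \<in> carrier G" for y
  proof -
    have "coset_qop G f \<one> (coset_qop G f \<one> y) = y"
      using assms(7) y by (simp add: quandle_involutory_def)
    then show ?thesis using y fcl by (simp add: coset_qop_def)
  qed
  have lat: "bij_betw (\<lambda>y. coset_qop G f y \<one>) (carrier G) (carrier G)"
    using assms(6) by (simp add: quandle_latin_def)
  have opy1: "coset_qop G f y \<one> = y \<otimes> inv (f y)" if y: "y \<in> carrier G" for y
    using y by (simp add: coset_qop_def)
  have surj1: "\<exists>y\<in>carrier G. z = y \<otimes> inv (f y)" if z: "z \<in> carrier G" for z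
  proof -
    have "z \<in> (\<lambda>y. coset_qop G f y \<one>) ` carrier G" using bij_betw_imp_surj_on[OF lat] z by simp
    then obtain y where "y \<in> carrier G" "z = coset_qop G f y \<one>" by blast
    then show ?thesis using opy1 by blast
  qed
  have finv: "f z = inv z" if z: "z \<in> carrier G" for z
  proof -
    obtain y where y: "y \<in> carrier G" and zy: "z = y \<otimes> inv (f y)" using surj1[OF z] by blast
    have "f z = f y \<otimes> inv (f (f y))" using y fcl by (simp add: zy)
    also have "\<dots> = f y \<otimes> inv y" using ff[OF y] by simp
    also have "\<dots> = inv z" using y fcl by (simp add: zy inv_mult_group)
    finally show ?thesis .
  qed
  have comm: "x \<otimes> y = y \<otimes> x" if x: "x \<in> carrier G" and y: "y \<in> carrier G" for x y
  proof -
    have "f (inv x \<otimes> inv y) = f (inv x) \<otimes> f (inv y)" using x y by simp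
    also have "\<dots> = x \<otimes> y" using x y by (simp add: finv)
    finally have a: "f (inv x \<otimes> inv y) = x \<otimes> y" .
    have "f (inv x \<otimes> inv y) = inv (inv x \<otimes> inv y)" using x y by (simp add: finv)
    also have "\<dots> = y \<otimes> x" using x y by (simp add: inv_mult_group)
    finally show ?thesis using a by simp
  qed
  interpret cg: comm_group G by (rule group_comm_groupI) (rule comm)
  have opeq: "coset_qop G f x y = x \<otimes> (inv y \<otimes> x)" if x: "x \<in> carrier G" and y: "y \<in> carrier G" for x y
    using x y by (simp add: coset_qop_def finv inv_mult_group)
  have sq: "\<exists>y\<in>carrier G. z = y \<otimes> y" if z: "z \<in> carrier G" for z
    using surj1[OF z] finv by auto
  show "cyclic_group G"
  proof (rule ccontr)
    assume nc: "\<not> cyclic_group G"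
    obtain n where card: "card (carrier G) = p ^ n" using assms(4) by blast
    have pr: "Factorial_Ring.prime (int p)" using assms(3) by simp
    have p0: "0 < p" using assms(3) by (simp add: prime_gt_0_nat)
    have ne: "carrier G \<noteq> {\<one>}"
    proof
      assume "carrier G = {\<one>}"
      then have "carrier G = range (\<lambda>n::int. \<one> [^] n)" by auto
      then have "cyclic_group G" using cyclic_group by blast
      with nc show False by simp
    qed
    obtain M1 where M1: "subgroup M1 G" "M1 \<noteq> carrier G"
      and mx1: "\<forall>K. subgroup K G \<and> M1 \<subseteq> K \<longrightarrow> K = M1 \<or> K = carrier G"
      using maximal_exists[OF assms(2) triv_subgroup] ne by metis
    obtain g where g: "g \<in> carrier G" "g \<notin> M1" using M1 subgroup.subset by blast
    have H2: "subgroup (range (\<lambda>n::int. g [^] n)) G" using subgroup_of_powers[OF g(1)] .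
    have H2ne: "range (\<lambda>n::int. g [^] n) \<noteq> carrier G"
      using nc cyclic_group g(1) by metis
    obtain M2 where M2: "subgroup M2 G" "range (\<lambda>n::int. g [^] n) \<subseteq> M2" "M2 \<noteq> carrier G"
      and mx2: "\<forall>K. subgroup K G \<and> M2 \<subseteq> K \<longrightarrow> K = M2 \<or> K = carrier G"
      using maximal_exists[OF assms(2) H2 H2ne] by blast
    have gM2: "g \<in> M2"
    proof -
      have "g [^] (1::int) \<in> range (\<lambda>n::int. g [^] n)" by blast
      then show ?thesis using M2(2) g(1) by auto
    qed
    have "\<not> M1 \<subseteq> M2"
    proof
      assume "M1 \<subseteq> M2"
      then have "M2 = M1 \<or> M2 = carrier G" using mx1 M2(1) by simp
      then show False using gM2 g(2) M2(3) by blast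
    qed
    then obtain u0 where u0: "u0 \<in> M1" "u0 \<notin> M2" by blast
    have u0c: "u0 \<in> carrier G" using u0 M1 subgroup.subset by blast
    define v0 where "v0 = g"
    have v0: "v0 \<in> M2" "v0 \<notin> M1" "v0 \<in> carrier G" using gM2 g by (auto simp: v0_def)
    obtain \<chi>1 :: "'g \<Rightarrow> int" where
      hm1: "\<forall>x\<in>carrier G. \<forall>y\<in>carrier G. \<chi>1 (x \<otimes> y) mod int p = (\<chi>1 x + \<chi>1 y) mod int p"
      and z1: "\<forall>x\<in>carrier G. int p dvd \<chi>1 x \<longleftrightarrow> x \<in> M1"
      using cg.char_exists[OF assms(2) card pr M1 mx1] by blast
    obtain \<chi>2 :: "'g \<Rightarrow> int" where
      hm2: "\<forall>x\<in>carrier G. \<forall>y\<in>carrier G. \<chi>2 (x \<otimes> y) mod int p = (\<chi>2 x + \<chi>2 y) mod int p"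
      and z2: "\<forall>x\<in>carrier G. int p dvd \<chi>2 x \<longleftrightarrow> x \<in> M2"
      using cg.char_exists[OF assms(2) card pr M2(1) M2(3) mx2] by blast
    obtain u where u: "u \<in> carrier G" "u0 = u \<otimes> u" using sq[OF u0c] by blast
    obtain v where v: "v \<in> carrier G" "v0 = v \<otimes> v" using sq[OF v0(3)] by blast
    define q where "q = int p"
    define \<omega> where "\<omega> x y = \<chi>1 x * \<chi>2 y - \<chi>1 y * \<chi>2 x" for x y
    define \<theta> where "\<theta> x y = rot p (\<omega> x y)" for x y
    have coc: "quandle_cocycle (carrier G) (coset_qop G f) {..<p} \<theta>"
      unfolding quandle_cocycle_def
    proof (intro conjI ballI)
      fix x y assume "x \<in> carrier G" "y \<in> carrier G"
      show "\<theta> x y \<in> Sym {..<p}" unfolding \<theta>_def by (rule rot_Sym[OF p0])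
    next
      fix x assume "x \<in> carrier G"
      show "\<theta> x x = id" unfolding \<theta>_def \<omega>_def by (simp add: rot_0)
    next
      fix x y z assume x: "x \<in> carrier G" and y: "y \<in> carrier G" and z: "z \<in> carrier G"
      have L: "\<omega> (x \<otimes> (inv y \<otimes> x)) (x \<otimes> (inv z \<otimes> x)) mod int p =
        ((2 * \<chi>1 x - \<chi>1 y) * (2 * \<chi>2 x - \<chi>2 z) - (2 * \<chi>1 x - \<chi>1 z) * (2 * \<chi>2 x - \<chi>2 y)) mod int p"
        unfolding \<omega>_def
        by (rule omega_mod) (simp_all only: chi_op[OF hm1] chi_op[OF hm2] x y z)
      have R: "\<omega> x (y \<otimes> (inv z \<otimes> y)) mod int p =
        (\<chi>1 x * (2 * \<chi>2 y - \<chi>2 z) - (2 * \<chi>1 y - \<chi>1 z) * \<chi>2 x) mod int p"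
        unfolding \<omega>_def
        by (rule omega_mod) (simp_all only: chi_op[OF hm1] chi_op[OF hm2] x y z)
      have "(\<omega> (x \<otimes> (inv y \<otimes> x)) (x \<otimes> (inv z \<otimes> x)) + \<omega> x z) mod int p
         = (((2 * \<chi>1 x - \<chi>1 y) * (2 * \<chi>2 x - \<chi>2 z) - (2 * \<chi>1 x - \<chi>1 z) * (2 * \<chi>2 x - \<chi>2 y)) + \<omega> x z) mod int p"
        by (rule mod_add_cong[OF L refl])
      also have "\<dots> = ((\<chi>1 x * (2 * \<chi>2 y - \<chi>2 z) - (2 * \<chi>1 y - \<chi>1 z) * \<chi>2 x) + \<omega> y z) mod int p"
        unfolding \<omega>_def by (rule arg_cong[where f="\<lambda>t. t mod int p"]) (simp add: algebra_simps)
      also have "\<dots> = (\<omega> x (y \<otimes> (inv z \<otimes> y)) + \<omega> y z) mod int p"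
        by (rule mod_add_cong[OF R[symmetric] refl])
      finally have E: "(\<omega> (x \<otimes> (inv y \<otimes> x)) (x \<otimes> (inv z \<otimes> x)) + \<omega> x z) mod int p
         = (\<omega> x (y \<otimes> (inv z \<otimes> y)) + \<omega> y z) mod int p" .
      show "\<theta> (coset_qop G f x y) (coset_qop G f x z) \<circ> \<theta> x z =
            \<theta> x (coset_qop G f y z) \<circ> \<theta> y z"
        unfolding \<theta>_def using x y z
        by (simp add: opeq rot_comp[OF p0] rot_cong[OF E])
    qed
    then obtain \<gamma> where
      gS: "\<forall>x\<in>carrier G. \<gamma> x \<in> Sym {..<p}" and
      gE: "\<forall>x\<in>carrier G. \<forall>y\<in>carrier G. \<theta> x y = \<gamma> (coset_qop G f x y) \<circ> Hilbert_Choice.inv (\<gamma> y)"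
      using assms(8) unfolding simply_connected_def cohomologous_trivial_def by blast
    have gstep: "\<gamma> (coset_qop G f x y) = \<theta> x y \<circ> \<gamma> y" if x: "x \<in> carrier G" and y: "y \<in> carrier G" for x y
    proof -
      have "bij (\<gamma> y)" using gS y Sym_bij by blast
      then have "inj (\<gamma> y)" by (rule bij_is_inj)
      then have "\<gamma> (coset_qop G f x y) \<circ> Hilbert_Choice.inv (\<gamma> y) \<circ> \<gamma> y = \<gamma> (coset_qop G f x y)"
        by (rule o_inv_o_cancel)
      then show ?thesis using gE x y by simp
    qed
    have Tstep: "\<gamma> (b \<otimes> (y \<otimes> b)) = rot p (\<chi>1 y * \<chi>2 b - \<chi>1 b * \<chi>2 y) \<circ> \<gamma> y"
      if b: "b \<in> carrier G" and y: "y \<in> carrier G" for b y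
    proof -
      have o1: "coset_qop G f \<one> y = inv y" using y by (simp add: opeq)
      have o2: "coset_qop G f b (inv y) = b \<otimes> (y \<otimes> b)" using y b by (simp add: opeq)
      have "\<gamma> (b \<otimes> (y \<otimes> b)) = \<theta> b (inv y) \<circ> \<gamma> (inv y)"
        using gstep[OF b inv_closed[OF y]] o2 by simp
      also have "\<gamma> (inv y) = \<theta> \<one> y \<circ> \<gamma> y" using gstep[OF one_closed y] o1 by simp
      finally have G1: "\<gamma> (b \<otimes> (y \<otimes> b)) = rot p (\<omega> b (inv y) + \<omega> \<one> y) \<circ> \<gamma> y"
        unfolding \<theta>_def by (simp only: o_assoc rot_comp[OF p0])
      have w1: "\<omega> b (inv y) mod int p = (\<chi>1 b * (- \<chi>2 y) - (- \<chi>1 y) * \<chi>2 b) mod int p"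
        unfolding \<omega>_def by (rule omega_mod) (simp_all only: chi_inv[OF hm1 y] chi_inv[OF hm2 y])
      have w2: "\<omega> \<one> y mod int p = (0 * \<chi>2 y - \<chi>1 y * 0) mod int p"
        unfolding \<omega>_def by (rule omega_mod) (simp_all only: chi_one[OF hm1] chi_one[OF hm2] mod_0)
      have "(\<omega> b (inv y) + \<omega> \<one> y) mod int p = ((\<chi>1 b * (- \<chi>2 y) - (- \<chi>1 y) * \<chi>2 b) + (0 * \<chi>2 y - \<chi>1 y * 0)) mod int p"
        by (rule mod_add_cong[OF w1 w2])
      also have "\<dots> = (\<chi>1 y * \<chi>2 b - \<chi>1 b * \<chi>2 y) mod int p" by (simp add: algebra_simps)
      finally have "rot p (\<omega> b (inv y) + \<omega> \<one> y) = rot p (\<chi>1 y * \<chi>2 b - \<chi>1 b * \<chi>2 y)"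
        by (rule rot_cong)
      then show ?thesis using G1 by simp
    qed
    define U where "U = u \<otimes> u"
    define V where "V = v \<otimes> v"
    have UV: "U \<in> carrier G" "V \<in> carrier G" using u v by (auto simp: U_def V_def)
    define y1 where "y1 = u \<otimes> (\<one> \<otimes> u)"
    define y2 where "y2 = v \<otimes> (y1 \<otimes> v)"
    define y3 where "y3 = inv u \<otimes> (y2 \<otimes> inv u)"
    define y4 where "y4 = inv v \<otimes> (y3 \<otimes> inv v)"
    have y1c: "y1 \<in> carrier G" and y2c: "y2 \<in> carrier G" and y3c: "y3 \<in> carrier G"
      using u v by (auto simp: y1_def y2_def y3_def)
    have y1e: "y1 = U" using u by (simp add: y1_def U_def)
    have y2e: "y2 = V \<otimes> U" using u v UV by (simp add: y2_def y1e cg.aba V_def)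
    have iU: "inv U = inv u \<otimes> inv u" using u by (simp add: U_def cg.inv_mult)
    have iV: "inv V = inv v \<otimes> inv v" using v by (simp add: V_def cg.inv_mult)
    have y3e: "y3 = inv U \<otimes> (V \<otimes> U)"
      unfolding y3_def by (subst cg.aba[OF inv_closed[OF u(1)] y2c]) (simp only: iU[symmetric] y2e)
    have "y4 = inv V \<otimes> (inv U \<otimes> (V \<otimes> U))"
      unfolding y4_def by (subst cg.aba[OF inv_closed[OF v(1)] y3c]) (simp only: iV[symmetric] y3e)
    then have y4e: "y4 = \<one>" using cg.cancel4[OF UV(1) UV(2)] by simp
    define A1 where "A1 = \<chi>1 u"
    define B1 where "B1 = \<chi>1 v"
    define A2 where "A2 = \<chi>2 u"
    define B2 where "B2 = \<chi>2 v"
    define e1 where "e1 = \<chi>1 \<one> * \<chi>2 u - \<chi>1 u * \<chi>2 \<one>"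
    define e2 where "e2 = \<chi>1 y1 * \<chi>2 v - \<chi>1 v * \<chi>2 y1"
    define e3 where "e3 = \<chi>1 y2 * \<chi>2 (inv u) - \<chi>1 (inv u) * \<chi>2 y2"
    define e4 where "e4 = \<chi>1 y3 * \<chi>2 (inv v) - \<chi>1 (inv v) * \<chi>2 y3"
    have s4: "\<gamma> y4 = rot p e4 \<circ> \<gamma> y3" unfolding y4_def e4_def by (rule Tstep[OF inv_closed[OF v(1)] y3c])
    have s3: "\<gamma> y3 = rot p e3 \<circ> \<gamma> y2" unfolding y3_def e3_def by (rule Tstep[OF inv_closed[OF u(1)] y2c])
    have s2: "\<gamma> y2 = rot p e2 \<circ> \<gamma> y1" unfolding y2_def e2_def by (rule Tstep[OF v(1) y1c])
    have s1: "\<gamma> y1 = rot p e1 \<circ> \<gamma> \<one>" unfolding y1_def e1_def by (rule Tstep[OF u(1) one_closed])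
    have "\<gamma> y4 = rot p e4 \<circ> (rot p e3 \<circ> (rot p e2 \<circ> (rot p e1 \<circ> \<gamma> \<one>)))"
      by (simp only: s4 s3 s2 s1)
    then have "\<gamma> \<one> = rot p e4 \<circ> (rot p e3 \<circ> (rot p e2 \<circ> (rot p e1 \<circ> \<gamma> \<one>)))"
      unfolding y4e .
    then have loop: "\<gamma> \<one> = rot p (e4 + (e3 + (e2 + e1))) \<circ> \<gamma> \<one>"
      by (simp only: o_assoc rot_comp[OF p0])
    have Emod: "(e4 + (e3 + (e2 + e1))) mod int p = 0"
    proof -
      have "bij (\<gamma> \<one>)" using Sym_bij[OF gS[rule_format, OF one_closed]] .
      then obtain t where t0: "0 = \<gamma> \<one> t" using surjD[OF bij_is_surj[OF \<open>bij (\<gamma> \<one>)\<close>], of 0] by (elim exE)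
      then have t: "\<gamma> \<one> t = 0" by simp
      have "\<gamma> \<one> t = rot p (e4 + (e3 + (e2 + e1))) (\<gamma> \<one> t)"
        using fun_cong[OF loop, of t] by simp
      then have "rot p (e4 + (e3 + (e2 + e1))) 0 = 0" using t by simp
      then show ?thesis by (rule rot_fix[OF p0])
    qed
    have cvals: "\<chi> \<one> mod int p = 0 mod int p \<and> \<chi> y1 mod int p = (2 * \<chi> u) mod int p
      \<and> \<chi> y2 mod int p = (2 * \<chi> u + 2 * \<chi> v) mod int p
      \<and> \<chi> y3 mod int p = (2 * \<chi> v) mod int p
      \<and> \<chi> (inv u) mod int p = (- \<chi> u) mod int p \<and> \<chi> (inv v) mod int p = (- \<chi> v) mod int p
      \<and> \<chi> U mod int p = (2 * \<chi> u) mod int p \<and> \<chi> V mod int p = (2 * \<chi> v) mod int p"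
      if hm: "\<forall>x\<in>carrier G. \<forall>y\<in>carrier G. \<chi> (x \<otimes> y) mod int p = (\<chi> x + \<chi> y) mod int p"
      for \<chi> :: "'g \<Rightarrow> int"
    proof -
      have one: "\<chi> \<one> mod int p = 0 mod int p" using chi_one[OF hm] by simp
      have iu: "\<chi> (inv u) mod int p = (- \<chi> u) mod int p" by (rule chi_inv[OF hm u(1)])
      have iv: "\<chi> (inv v) mod int p = (- \<chi> v) mod int p" by (rule chi_inv[OF hm v(1)])
      have "\<chi> y1 mod int p = (\<chi> \<one> + 2 * \<chi> u) mod int p"
        unfolding y1_def by (rule chi_T[OF hm u(1) one_closed])
      also have "\<dots> = (0 + 2 * \<chi> u) mod int p" by (rule mod_add_cong[OF one refl])
      finally have c1: "\<chi> y1 mod int p = (2 * \<chi> u) mod int p" by simp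
      have "\<chi> y2 mod int p = (\<chi> y1 + 2 * \<chi> v) mod int p"
        unfolding y2_def by (rule chi_T[OF hm v(1) y1c])
      also have "\<dots> = (2 * \<chi> u + 2 * \<chi> v) mod int p" by (rule mod_add_cong[OF c1 refl])
      finally have c2: "\<chi> y2 mod int p = (2 * \<chi> u + 2 * \<chi> v) mod int p" .
      have "\<chi> y3 mod int p = (\<chi> y2 + 2 * \<chi> (inv u)) mod int p"
        unfolding y3_def by (rule chi_T[OF hm inv_closed[OF u(1)] y2c])
      also have "\<dots> = ((2 * \<chi> u + 2 * \<chi> v) + 2 * (- \<chi> u)) mod int p"
        by (rule mod_add_cong[OF c2 mod_mult_cong[OF refl iu]])
      also have "\<dots> = (2 * \<chi> v) mod int p" by (simp add: algebra_simps)
      finally have c3: "\<chi> y3 mod int p = (2 * \<chi> v) mod int p" .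
      have cU: "\<chi> U mod int p = (2 * \<chi> u) mod int p" unfolding U_def by (rule chi_sq[OF hm u(1)])
      have cV: "\<chi> V mod int p = (2 * \<chi> v) mod int p" unfolding V_def by (rule chi_sq[OF hm v(1)])
      show ?thesis using one iu iv c1 c2 c3 cU cV by blast
    qed
    note C1 = cvals[OF hm1, folded A1_def B1_def]
    note C2 = cvals[OF hm2, folded A2_def B2_def]
    have E1: "e1 mod int p = (0 * A2 - A1 * 0) mod int p"
      unfolding e1_def A1_def[symmetric] A2_def[symmetric]
      by (rule omega_mod) (use C1 C2 in auto)
    have E2: "e2 mod int p = ((2 * A1) * B2 - B1 * (2 * A2)) mod int p"
      unfolding e2_def B1_def[symmetric] B2_def[symmetric]
      by (rule omega_mod) (use C1 C2 in auto)
    have E3: "e3 mod int p = ((2 * A1 + 2 * B1) * (- A2) - (- A1) * (2 * A2 + 2 * B2)) mod int p"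
      unfolding e3_def
      by (rule omega_mod) (use C1 C2 in auto)
    have E4: "e4 mod int p = ((2 * B1) * (- B2) - (- B1) * (2 * B2)) mod int p"
      unfolding e4_def
      by (rule omega_mod) (use C1 C2 in auto)
    have "(e4 + (e3 + (e2 + e1))) mod int p =
      (((2 * B1) * (- B2) - (- B1) * (2 * B2)) + (((2 * A1 + 2 * B1) * (- A2) - (- A1) * (2 * A2 + 2 * B2))
        + (((2 * A1) * B2 - B1 * (2 * A2)) + (0 * A2 - A1 * 0)))) mod int p"
      by (intro mod_add_cong E1 E2 E3 E4)
    also have "\<dots> = (4 * (A1 * B2 - B1 * A2)) mod int p"
      by (rule arg_cong[where f="\<lambda>t. t mod int p"]) (simp add: algebra_simps)
    finally have F1: "(4 * (A1 * B2 - B1 * A2)) mod int p = 0" using Emod by simp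
    have "(\<chi>1 u0 * \<chi>2 v0 - \<chi>1 v0 * \<chi>2 u0) mod int p = ((2 * A1) * (2 * B2) - (2 * B1) * (2 * A2)) mod int p"
      unfolding u(2) v(2) U_def[symmetric] V_def[symmetric]
      by (rule omega_mod) (use C1 C2 in auto)
    also have "\<dots> = (4 * (A1 * B2 - B1 * A2)) mod int p"
      by (rule arg_cong[where f="\<lambda>t. t mod int p"]) (simp add: algebra_simps)
    finally have d1: "int p dvd (\<chi>1 u0 * \<chi>2 v0 - \<chi>1 v0 * \<chi>2 u0)" using F1 by (simp add: mod_eq_0_iff_dvd)
    have d2: "int p dvd \<chi>1 u0 * \<chi>2 v0" using z1 u0c u0(1) by simp
    have "int p dvd \<chi>1 u0 * \<chi>2 v0 - (\<chi>1 u0 * \<chi>2 v0 - \<chi>1 v0 * \<chi>2 u0)"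
      by (rule dvd_diff[OF d2 d1])
    then have "int p dvd \<chi>1 v0 * \<chi>2 u0" by simp
    then have "int p dvd \<chi>1 v0 \<or> int p dvd \<chi>2 u0" using pr by (simp add: prime_dvd_mult_iff)
    then show False using z1 z2 v0 u0 u0c by blast
  qed
qed

theorem proposition4p6:
  fixes G :: "('g, 'b) monoid_scheme" and f :: "'g \<Rightarrow> 'g" and p :: nat
  assumes "group G"
    and "finite (carrier G)"
    and "Factorial_Ring.prime p"
    and "\<exists>n. card (carrier G) = p ^ n"
    and "f \<in> iso G G"
    and "quandle_latin (carrier G) (coset_qop G f)"
    and "quandle_involutory (carrier G) (coset_qop G f)"
    and "simply_connected (carrier G) (coset_qop G f)"
  shows "cyclic_group G"
  by (rule main_aux[OF assms])

end
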